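(* In the multi-sender privacy game, let $(\alpha^{(i),0})_{i\in\mathbf{N}}\in\prod_iA'_i$ and $\beta^0\in B'$, and generate a random sequence as follows: for $k=1,2,\dots$, select $j\in\{0,1,\dots,n\}$ uniformly at random (independently of the past); if $j=0$, choose $\beta^k\in\arg\min_{\beta\in B'}V((\alpha^{(i),k-1})_{i},\beta)$ and set $\alpha^{(i),k}=\alpha^{(i),k-1}$ for all $i\in\mathbf{N}$; if $j\ge1$, choose $\alpha^{(j),k}\in\arg\min_{\alpha^{(j)}\in A'_j}U_j(\alpha^{(j)},(\alpha^{(i),k-1})_{i\neq j},\beta^{k-1})$, set $\alpha^{(i),k}=\alpha^{(i),k-1}$ for $i\in\mathbf{N}\setminus\{j\}$ and $\beta^k=\beta^{k-1}$. Then for every $\epsilon>0$, $\lim_{k\to\infty}\mathbb{P}\{((\alpha^{(i),k})_{i\in\mathbf{N}},\beta^k)\in\mathcal{N}'_\epsilon\}=1$, where $\mathcal{N}'_\epsilon$ is the set of all $((\alpha^{(i)})_i,\beta)\in\prod_iA'_i\times B'$ such that $U_j((\alpha^{(i)})_i,\beta)\le U_j(\bar\alpha^{(j)},(\alpha^{(i)})_{i\neq j},\beta)+\epsilon$ for all $j\in\mathbf{N}$, $\bar\alpha^{(j)}\in A'_j$, and $V((\alpha^{(i)})_i,\beta)\le V((\alpha^{(i)})_i,\bar\beta)+\epsilon$ for all $\bar\beta\in B'$.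
   Context: Multi-sender privacy game. Let $n\ge 2$, $\mathbf{N}=\{1,\dots,n\}$, and let $\mathcal{X}$, $\mathcal{W}_i$, $\mathcal{Y}_i$ ($i\in\mathbf{N}$) be finite nonempty sets. $(X,(Z_i)_{i\in\mathbf{N}},(W_i)_{i\in\mathbf{N}})$ has joint probability mass function $p$ on $\mathcal{X}\times\mathcal{X}^n\times\prod_i\mathcal{W}_i$. Sender $i$ observes $(Z_i,W_i)$ and sends $Y_i\in\mathcal{Y}_i$ with $\mathbb{P}\{Y_i=y_i\mid Z_i=z_i,W_i=w_i\}=\alpha^{(i)}_{y_iz_iw_i}$, independently across senders given the observations, where $\alpha^{(i)}\in A'_i=\{\alpha^{(i)}:\alpha^{(i)}_{y_iz_iw_i}\in[0,1],\ \sum_{y_i}\alpha^{(i)}_{y_iz_iw_i}=1\ \forall(z_i,w_i)\in\mathcal{X}\times\mathcal{W}_i\}$. The receiver outputs $\hat X\in\mathcal{X}$ with $\mathbb{P}\{\hat X=\hat x\mid (Y_i)_i=(y_i)_i\}=\beta_{\hat x y_1\dots y_n}$, $\beta\in B'=\{\beta:\beta_{\hat x y_1\dots y_n}\in[0,1],\ \sum_{\hat x}\beta_{\hat x y_1\dots y_n}=1\ \forall (y_i)_i\}$. Let $d:\mathcal{X}\times\mathcal{X}\to\mathbb{R}_{\ge0}$ and $\varrho\in\mathbb{R}$. Define $\xi'(\beta,(\alpha^{(i)})_i)=\sum_{(y_1,z_1,w_1)}\cdots\sum_{(y_n,z_n,w_n)}\sum_{\hat x,x\in\mathcal{X}}d(x,\hat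 x)\beta_{\hat x y_1\dots y_n}\prod_{i\in\mathbf{N}}\alpha^{(i)}_{y_iz_iw_i}\,p(x,(z_i)_i,(w_i)_i)$, each $(y_i,z_i,w_i)$ ranging over $\mathcal{Y}_i\times\mathcal{X}\times\mathcal{W}_i$ (this is $\mathbb{E}\{d(X,\hat X)\}$). Define $\zeta'_j(\alpha^{(j)})=I(Y_j;W_j)=\sum_{y,w}P^j_{yw}\log\frac{P^j_{yw}}{P^j_yP^j_w}$ (with $0\log0=0$), where $P^j_w=\mathbb{P}\{W_j=w\}$, $P^j_{yw}=\sum_{z\in\mathcal{X}}\alpha^{(j)}_{yzw}\mathbb{P}\{Z_j=z,W_j=w\}$, $P^j_y=\sum_w P^j_{yw}$. Sender $j$'s cost: $U_j((\alpha^{(i)})_i,\beta)=\xi'(\beta,(\alpha^{(i)})_i)+\varrho\zeta'_j(\alpha^{(j)})$; receiver's cost: $V((\alpha^{(i)})_i,\beta)=\xi'(\beta,(\alpha^{(i)})_i)$. *)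

theory Defs
  imports "HOL-Probability.Probability_Mass_Function"
begin

text \<open>Senders are indexed by 1..n; the receiver corresponds to the draw j = 0.
  Sender strategies alpha i y z w, receiver strategy beta xhat ys, where ys is a
  function on {1..n} (extensional, element of PiE).  Alphabets W_i, Y_i are carrier
  sets Ws i, Ys i; the source alphabet X is the finite type 'x.\<close>

definition inA :: "'y set \<Rightarrow> 'w set \<Rightarrow> ('y \<Rightarrow> 'x \<Rightarrow> 'w \<Rightarrow> real) \<Rightarrow> bool" where
  "inA Y W a \<longleftrightarrow>
     (\<forall>z w. w \<in> W \<longrightarrow> (\<forall>y\<in>Y. 0 \<le> a y z w \<and> a y z w \<le> 1) \<and> (\<Sum>y\<in>Y. a y z w) = 1)"

definition inB :: "nat \<Rightarrow> (nat \<Rightarrow> 'y set) \<Rightarrow> ('x::finite \<Rightarrow> (nat \<Rightarrow> 'y) \<Rightarrow> real) \<Rightarrow> bool" where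
  "inB n Ys b \<longleftrightarrow>
     (\<forall>ys \<in> PiE {1..n} Ys. (\<forall>x. 0 \<le> b x ys \<and> b x ys \<le> 1) \<and> (\<Sum>x\<in>UNIV. b x ys) = 1)"

definition xi :: "nat \<Rightarrow> (nat \<Rightarrow> 'y set) \<Rightarrow> (nat \<Rightarrow> 'w set) \<Rightarrow> ('x::finite \<Rightarrow> 'x \<Rightarrow> real)
   \<Rightarrow> ('x \<Rightarrow> (nat \<Rightarrow> 'x) \<Rightarrow> (nat \<Rightarrow> 'w) \<Rightarrow> real)
   \<Rightarrow> ('x \<Rightarrow> (nat \<Rightarrow> 'y) \<Rightarrow> real) \<Rightarrow> (nat \<Rightarrow> 'y \<Rightarrow> 'x \<Rightarrow> 'w \<Rightarrow> real) \<Rightarrow> real" where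
  "xi n Ys Ws d p beta alpha =
     (\<Sum>ys\<in>PiE {1..n} Ys. \<Sum>zs\<in>PiE {1..n} (\<lambda>_. UNIV). \<Sum>ws\<in>PiE {1..n} Ws. \<Sum>xh\<in>UNIV. \<Sum>x\<in>UNIV.
        d x xh * beta xh ys * (\<Prod>i\<in>{1..n}. alpha i (ys i) (zs i) (ws i)) * p x zs ws)"

definition PW :: "nat \<Rightarrow> (nat \<Rightarrow> 'w set) \<Rightarrow> ('x::finite \<Rightarrow> (nat \<Rightarrow> 'x) \<Rightarrow> (nat \<Rightarrow> 'w) \<Rightarrow> real)
   \<Rightarrow> nat \<Rightarrow> 'w \<Rightarrow> real" where
  "PW n Ws p j w =
     (\<Sum>x\<in>UNIV. \<Sum>zs\<in>PiE {1..n} (\<lambda>_. UNIV). \<Sum>ws\<in>{ws \<in> PiE {1..n} Ws. ws j = w}. p x zs ws)"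

definition PZW :: "nat \<Rightarrow> (nat \<Rightarrow> 'w set) \<Rightarrow> ('x::finite \<Rightarrow> (nat \<Rightarrow> 'x) \<Rightarrow> (nat \<Rightarrow> 'w) \<Rightarrow> real)
   \<Rightarrow> nat \<Rightarrow> 'x \<Rightarrow> 'w \<Rightarrow> real" where
  "PZW n Ws p j z w =
     (\<Sum>x\<in>UNIV. \<Sum>zs\<in>{zs \<in> PiE {1..n} (\<lambda>_. UNIV). zs j = z}. \<Sum>ws\<in>{ws \<in> PiE {1..n} Ws. ws j = w}.
        p x zs ws)"

text \<open>Mutual information I(Y_j; W_j) (natural logarithm, 0 log 0 = 0).\<close>
definition zeta :: "nat \<Rightarrow> (nat \<Rightarrow> 'y set) \<Rightarrow> (nat \<Rightarrow> 'w set)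
   \<Rightarrow> ('x::finite \<Rightarrow> (nat \<Rightarrow> 'x) \<Rightarrow> (nat \<Rightarrow> 'w) \<Rightarrow> real) \<Rightarrow> nat \<Rightarrow> ('y \<Rightarrow> 'x \<Rightarrow> 'w \<Rightarrow> real) \<Rightarrow> real" where
  "zeta n Ys Ws p j a =
     (let Pyw = (\<lambda>y w. \<Sum>z\<in>UNIV. a y z w * PZW n Ws p j z w);
          Py = (\<lambda>y. \<Sum>w\<in>Ws j. Pyw y w)
      in \<Sum>y\<in>Ys j. \<Sum>w\<in>Ws j.
           (if Pyw y w = 0 then 0 else Pyw y w * ln (Pyw y w / (Py y * PW n Ws p j w))))"

definition U :: "nat \<Rightarrow> (nat \<Rightarrow> 'y set) \<Rightarrow> (nat \<Rightarrow> 'w set) \<Rightarrow> ('x::finite \<Rightarrow> 'x \<Rightarrow> real)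
   \<Rightarrow> ('x \<Rightarrow> (nat \<Rightarrow> 'x) \<Rightarrow> (nat \<Rightarrow> 'w) \<Rightarrow> real) \<Rightarrow> real \<Rightarrow> nat
   \<Rightarrow> (nat \<Rightarrow> 'y \<Rightarrow> 'x \<Rightarrow> 'w \<Rightarrow> real) \<Rightarrow> ('x \<Rightarrow> (nat \<Rightarrow> 'y) \<Rightarrow> real) \<Rightarrow> real" where
  "U n Ys Ws d p rho j alpha beta = xi n Ys Ws d p beta alpha + rho * zeta n Ys Ws p j (alpha j)"

definition V :: "nat \<Rightarrow> (nat \<Rightarrow> 'y set) \<Rightarrow> (nat \<Rightarrow> 'w set) \<Rightarrow> ('x::finite \<Rightarrow> 'x \<Rightarrow> real)
   \<Rightarrow> ('x \<Rightarrow> (nat \<Rightarrow> 'x) \<Rightarrow> (nat \<Rightarrow> 'w) \<Rightarrow> real)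
   \<Rightarrow> (nat \<Rightarrow> 'y \<Rightarrow> 'x \<Rightarrow> 'w \<Rightarrow> real) \<Rightarrow> ('x \<Rightarrow> (nat \<Rightarrow> 'y) \<Rightarrow> real) \<Rightarrow> real" where
  "V n Ys Ws d p alpha beta = xi n Ys Ws d p beta alpha"

definition Neps :: "nat \<Rightarrow> (nat \<Rightarrow> 'y set) \<Rightarrow> (nat \<Rightarrow> 'w set) \<Rightarrow> ('x::finite \<Rightarrow> 'x \<Rightarrow> real)
   \<Rightarrow> ('x \<Rightarrow> (nat \<Rightarrow> 'x) \<Rightarrow> (nat \<Rightarrow> 'w) \<Rightarrow> real) \<Rightarrow> real \<Rightarrow> real
   \<Rightarrow> ((nat \<Rightarrow> 'y \<Rightarrow> 'x \<Rightarrow> 'w \<Rightarrow> real) \<times> ('x \<Rightarrow> (nat \<Rightarrow> 'y) \<Rightarrow> real)) set" where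
  "Neps n Ys Ws d p rho eps =
     {(alpha, beta). (\<forall>i\<in>{1..n}. inA (Ys i) (Ws i) (alpha i)) \<and> inB n Ys beta \<and>
        (\<forall>j\<in>{1..n}. \<forall>ab. inA (Ys j) (Ws j) ab \<longrightarrow>
            U n Ys Ws d p rho j alpha beta \<le> U n Ys Ws d p rho j (alpha(j := ab)) beta + eps) \<and>
        (\<forall>bb. inB n Ys bb \<longrightarrow> V n Ys Ws d p alpha beta \<le> V n Ys Ws d p alpha bb + eps)}"

text \<open>State after a history of draws; the history list has the MOST RECENT draw at its head.
  selR h alpha: receiver's chosen best response given past history h and current alphas;
  selS h j alpha beta: sender j's chosen best response.\<close>
primrec traj :: "(nat list \<Rightarrow> (nat \<Rightarrow> 's) \<Rightarrow> 'b) \<Rightarrow> (nat list \<Rightarrow> nat \<Rightarrow> (nat \<Rightarrow> 's) \<Rightarrow> 'b \<Rightarrow> 's)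
    \<Rightarrow> ((nat \<Rightarrow> 's) \<times> 'b) \<Rightarrow> nat list \<Rightarrow> ((nat \<Rightarrow> 's) \<times> 'b)" where
  "traj selR selS s0 [] = s0"
| "traj selR selS s0 (j # h) =
     (let s = traj selR selS s0 h in
      if j = 0 then (fst s, selR h (fst s))
      else ((fst s)(j := selS h j (fst s) (snd s)), snd s))"

end

theory Submission
  imports Defs
begin


lemma lists_Suc_sum:
  fixes F :: "nat list \<Rightarrow> real"
  shows "(\<Sum>h\<in>{h. length h = Suc k \<and> set h \<subseteq> A}. F h) =
         (\<Sum>j\<in>A. \<Sum>h\<in>{h. length h = k \<and> set h \<subseteq> A}. F (j # h))"
proof -
  have eq: "{h. length h = Suc k \<and> set h \<subseteq> A} =
      (\<lambda>(j,h). j # h) ` (A \<times> {h. length h = k \<and> set h \<subseteq> A})"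
  proof (rule set_eqI, rule iffI)
    fix x assume "x \<in> {h. length h = Suc k \<and> set h \<subseteq> A}"
    then show "x \<in> (\<lambda>(j,h). j # h) ` (A \<times> {h. length h = k \<and> set h \<subseteq> A})"
      by (cases x) (auto intro!: image_eqI[where x="(hd x, tl x)"])
  qed auto
  have inj: "inj_on (\<lambda>(j,h). j # h) (A \<times> {h. length h = k \<and> set h \<subseteq> A})"
    by (auto simp: inj_on_def)
  show ?thesis
    unfolding eq sum.reindex[OF inj] by (simp add: sum.cartesian_product split_def)
qed

lemma abstract_conv:
  fixes f :: "nat list \<Rightarrow> real" and g :: "nat list \<Rightarrow> bool" and A :: "nat set"
  assumes finA: "finite A" and neA: "A \<noteq> {}"
    and lb: "\<And>h. set h \<subseteq> A \<Longrightarrow> f h \<ge> Lm"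
    and mono: "\<And>h j. set h \<subseteq> A \<Longrightarrow> j \<in> A \<Longrightarrow> f (j # h) \<le> f h"
    and drop: "\<And>h. set h \<subseteq> A \<Longrightarrow> \<not> g h \<Longrightarrow> \<exists>j\<in>A. f (j # h) \<le> f h - eps"
    and eps: "eps > 0"
  shows "(\<lambda>k. measure_pmf.prob (pmf_of_set {h. length h = k \<and> set h \<subseteq> A}) {h. g h}) \<longlonglongrightarrow> 1"
proof -
  define L where "L k = {h. length h = k \<and> set h \<subseteq> A}" for k
  define c where "c = card A"
  have cpos: "c > 0" using finA neA by (simp add: c_def card_gt_0_iff)
  have finL: "finite (L k)" for k
    using finite_lists_length_eq[OF finA, of k] by (simp add: L_def conj_commute)
  have cardL: "card (L k) = c ^ k" for k
    using card_lists_length_eq[OF finA, of k] by (simp add: L_def conj_commute c_def)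
  have neL: "L k \<noteq> {}" for k
    using cardL[of k] cpos by auto
  define B where "B k = card {h \<in> L k. \<not> g h}" for k
  define b where "b k = real (B k) / real c ^ k" for k
  define S where "S k = (\<Sum>h\<in>L k. f h)" for k
  have step: "S (Suc k) \<le> real c * S k - eps * real (B k)" for k
  proof -
    have per: "(\<Sum>j\<in>A. f (j # h)) \<le> real c * f h - eps * (if g h then 0 else 1)"
      if h: "h \<in> L k" for h
    proof -
      have sA: "set h \<subseteq> A" using h by (simp add: L_def)
      have all: "(\<Sum>j\<in>A. f (j # h)) \<le> (\<Sum>j\<in>A. f h)"
        by (rule sum_mono) (use mono sA in auto)
      show ?thesis
      proof (cases "g h")
        case True then show ?thesis using all by (simp add: c_def)
      next
        case False
        then obtain j0 where j0: "j0 \<in> A" "f (j0 # h) \<le> f h - eps" using drop sA by blast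
        have "(\<Sum>j\<in>A. f (j # h)) = f (j0 # h) + (\<Sum>j\<in>A - {j0}. f (j # h))"
          using finA j0(1) by (simp add: sum.remove)
        also have "\<dots> \<le> (f h - eps) + (\<Sum>j\<in>A - {j0}. f h)"
          using j0(2) by (intro add_mono sum_mono) (use mono sA in auto)
        also have "\<dots> = real c * f h - eps"
        proof -
          have e1: "(\<Sum>j\<in>A - {j0}. f h) = real (c - 1) * f h"
            using finA j0(1) by (simp add: c_def)
          have e2: "real c = real (c - 1) + 1" using cpos by simp
          show ?thesis unfolding e1 e2 by (simp add: algebra_simps)
        qed
        finally show ?thesis using False by simp
      qed
    qed
    have "S (Suc k) = (\<Sum>h\<in>L k. \<Sum>j\<in>A. f (j # h))"
      unfolding S_def L_def lists_Suc_sum by (rule sum.swap)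
    also have "\<dots> \<le> (\<Sum>h\<in>L k. real c * f h - eps * (if g h then 0 else 1))"
      by (rule sum_mono) (rule per)
    also have "\<dots> = real c * S k - eps * real (B k)"
      using finL[of k] Collect_conj_eq[of "\<lambda>h. h \<in> L k" "\<lambda>h. \<not> g h"]
      by (simp add: S_def B_def sum_subtractf sum_distrib_left[symmetric] sum.If_cases Collect_neg_eq)
    finally show ?thesis .
  qed
  have Slb: "S k \<ge> real c ^ k * Lm" for k
  proof -
    have "(\<Sum>h\<in>L k. Lm) \<le> S k" unfolding S_def
      by (rule sum_mono) (auto simp: L_def intro: lb)
    then show ?thesis using cardL[of k] by simp
  qed
  have inv: "S k / real c ^ k + eps / real c * (\<Sum>i<k. b i) \<le> f []" for k
  proof (induction k)
    case 0
    have "L 0 = {[]}" by (auto simp: L_def)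
    then show ?case by (simp add: S_def)
  next
    case (Suc k)
    have "S (Suc k) / real c ^ Suc k \<le> (real c * S k - eps * real (B k)) / real c ^ Suc k"
      using step[of k] cpos by (simp add: divide_right_mono)
    also have "\<dots> = S k / real c ^ k - eps / real c * b k"
      using cpos by (simp add: b_def field_simps)
    finally show ?case using Suc.IH by (simp add: algebra_simps)
  qed
  have bnn: "0 \<le> b k" for k by (simp add: b_def)
  have bnd: "(\<Sum>i<k. b i) \<le> (f [] - Lm) * real c / eps" for k
  proof -
    have "Lm \<le> S k / real c ^ k" using Slb[of k] cpos by (simp add: field_simps)
    then have "eps / real c * (\<Sum>i<k. b i) \<le> f [] - Lm" using inv[of k] by linarith
    then show ?thesis using cpos eps by (simp add: field_simps)
  qed
  have "summable b" by (rule summableI_nonneg_bounded[OF bnn bnd])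
  then have b0: "b \<longlonglongrightarrow> 0" by (rule summable_LIMSEQ_zero)
  have eqp: "measure_pmf.prob (pmf_of_set (L k)) {h. g h} = 1 - b k" for k
  proof -
    have "card (L k \<inter> {h. g h}) + B k = card (L k)"
      unfolding B_def using finL[of k]
      by (subst card_Un_disjoint[symmetric]) (auto intro: arg_cong[where f=card])
    then show ?thesis
      using measure_pmf_of_set[OF neL finL, of k "{h. g h}"] cardL[of k] cpos
      by (simp add: b_def field_simps)
         (metis add_diff_cancel_right' of_nat_add of_nat_power)
  qed
  have "(\<lambda>k. 1 - b k) \<longlonglongrightarrow> 1 - 0" by (intro tendsto_intros b0)
  then show ?thesis using eqp by (simp add: L_def)
qed


lemma term_bound:
  fixes P Q K R :: real
  assumes "0 < P" "P \<le> Q" "Q \<le> K" "P \<le> K" "0 < R"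
  shows "\<bar>P * ln (P / (Q * R))\<bar> \<le> K * R + K / R"
proof -
  have Qp: "0 < Q" using assms by linarith
  define u where "u = P / (Q * R)"
  have up: "0 < u" using assms Qp by (simp add: u_def)
  have up1: "P * ln u \<le> P * (u - 1)"
    using ln_le_minus_one[OF up] assms(1) by (simp add: mult_left_mono)
  have "P * (u - 1) \<le> P * u" using assms(1) by simp
  also have "P * u = (P / Q) * (P / R)" by (simp add: u_def)
  also have "\<dots> \<le> 1 * (P / R)"
    using assms Qp by (intro mult_right_mono) (auto simp: divide_le_eq)
  also have "\<dots> \<le> K / R" using assms by (simp add: divide_right_mono)
  finally have U: "P * ln u \<le> K / R" using up1 by linarith
  have l1: "ln (1 / u) \<le> 1 / u - 1" using ln_le_minus_one up by simp
  have "ln (1 / u) = - ln u" using up by (simp add: ln_div)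
  then have "ln u \<ge> 1 - 1 / u" using l1 by linarith
  then have "P * ln u \<ge> P * (1 - 1 / u)" using assms(1) by (simp add: mult_left_mono)
  moreover have "P * (1 - 1 / u) = P - Q * R" using assms Qp by (simp add: u_def field_simps)
  moreover have "Q * R \<le> K * R" using assms by simp
  moreover have "0 \<le> K / R" using assms by simp
  ultimately have L: "P * ln u \<ge> - (K * R)" using assms by linarith
  have "0 \<le> K * R" "0 \<le> K / R" using assms by auto
  then show ?thesis using U L unfolding u_def[symmetric] abs_le_iff by linarith
qed

lemma PZW_nonneg:
  assumes "\<forall>x. \<forall>zs\<in>PiE {1..n} (\<lambda>_. UNIV). \<forall>ws\<in>PiE {1..n} Ws. p x zs ws \<ge> 0"
  shows "0 \<le> PZW n Ws p j z w"
  unfolding PZW_def using assms by (intro sum_nonneg) auto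

lemma PW_nonneg:
  assumes "\<forall>x. \<forall>zs\<in>PiE {1..n} (\<lambda>_. UNIV). \<forall>ws\<in>PiE {1..n} Ws. p x zs ws \<ge> 0"
  shows "0 \<le> PW n Ws p j w"
  unfolding PW_def using assms by (intro sum_nonneg) auto

definition Kc :: "nat \<Rightarrow> (nat \<Rightarrow> 'w set) \<Rightarrow> ('x::finite \<Rightarrow> (nat \<Rightarrow> 'x) \<Rightarrow> (nat \<Rightarrow> 'w) \<Rightarrow> real) \<Rightarrow> nat \<Rightarrow> real" where
  "Kc n Ws p j = (\<Sum>w\<in>Ws j. \<Sum>z\<in>UNIV. PZW n Ws p j z w)"

definition Cz :: "nat \<Rightarrow> (nat \<Rightarrow> 'y set) \<Rightarrow> (nat \<Rightarrow> 'w set) \<Rightarrow> ('x::finite \<Rightarrow> (nat \<Rightarrow> 'x) \<Rightarrow> (nat \<Rightarrow> 'w) \<Rightarrow> real) \<Rightarrow> nat \<Rightarrow> real" where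
  "Cz n Ys Ws p j = (\<Sum>y\<in>Ys j. \<Sum>w\<in>Ws j. Kc n Ws p j * PW n Ws p j w + Kc n Ws p j / PW n Ws p j w)"

lemma zeta_bound:
  fixes p :: "'x::finite \<Rightarrow> (nat \<Rightarrow> 'x) \<Rightarrow> (nat \<Rightarrow> 'w) \<Rightarrow> real"
  assumes pn: "\<forall>x. \<forall>zs\<in>PiE {1..n} (\<lambda>_. UNIV). \<forall>ws\<in>PiE {1..n} Ws. p x zs ws \<ge> 0"
    and fW: "finite (Ws j)" and fY: "finite (Ys j)"
    and aA: "inA (Ys j) (Ws j) a"
  shows "\<bar>zeta n Ys Ws p j a\<bar> \<le> Cz n Ys Ws p j"
proof -
  define Pyw where "Pyw y w = (\<Sum>z\<in>UNIV. a y z w * PZW n Ws p j z w)" for y w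
  define Py where "Py y = (\<Sum>w\<in>Ws j. Pyw y w)" for y
  define K where "K = Kc n Ws p j"
  define R where "R w = PW n Ws p j w" for w
  have PZ: "0 \<le> PZW n Ws p j z w" for z w using PZW_nonneg[OF pn] .
  have Rn: "0 \<le> R w" for w using PW_nonneg[OF pn] by (simp add: R_def)
  have a01: "0 \<le> a y z w \<and> a y z w \<le> 1" if "y \<in> Ys j" "w \<in> Ws j" for y z w
    using aA that by (auto simp: inA_def)
  have Pn: "0 \<le> Pyw y w" if "y \<in> Ys j" "w \<in> Ws j" for y w
    unfolding Pyw_def using a01[OF that] PZ by (intro sum_nonneg) auto
  have Ple: "Pyw y w \<le> (\<Sum>z\<in>UNIV. PZW n Ws p j z w)" if "y \<in> Ys j" "w \<in> Ws j" for y w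
    unfolding Pyw_def using a01[OF that] PZ by (intro sum_mono) (simp add: mult_left_le_one_le)
  have Sn: "0 \<le> (\<Sum>z\<in>UNIV. PZW n Ws p j z w)" for w using PZ by (intro sum_nonneg) auto
  have PK: "Pyw y w \<le> K" if "y \<in> Ys j" "w \<in> Ws j" for y w
  proof -
    have "(\<Sum>z\<in>UNIV. PZW n Ws p j z w) \<le> K"
      unfolding K_def Kc_def using fW that(2) Sn by (intro member_le_sum) auto
    then show ?thesis using Ple[OF that] by linarith
  qed
  have PQ: "Pyw y w \<le> Py y" if "y \<in> Ys j" "w \<in> Ws j" for y w
    unfolding Py_def using fW that Pn by (intro member_le_sum) auto
  have QK: "Py y \<le> K" if "y \<in> Ys j" for y
    unfolding Py_def K_def Kc_def using Ple that by (intro sum_mono) auto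
  have Kn: "0 \<le> K" unfolding K_def Kc_def using Sn PZ by (intro sum_nonneg) auto
  have tb: "\<bar>(if Pyw y w = 0 then 0 else Pyw y w * ln (Pyw y w / (Py y * R w)))\<bar> \<le> K * R w + K / R w"
    if "y \<in> Ys j" "w \<in> Ws j" for y w
  proof (cases "Pyw y w = 0")
    case True then show ?thesis using Kn Rn[of w] by simp
  next
    case False
    then have P0: "0 < Pyw y w" using Pn[OF that] by linarith
    show ?thesis
    proof (cases "R w = 0")
      case True then show ?thesis using False Kn by simp
    next
      case False
      then have "0 < R w" using Rn[of w] by linarith
      then show ?thesis using term_bound[OF P0 PQ[OF that] QK[OF that(1)] PK[OF that]] P0 by simp
    qed
  qed
  have "zeta n Ys Ws p j a = (\<Sum>y\<in>Ys j. \<Sum>w\<in>Ws j.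
           (if Pyw y w = 0 then 0 else Pyw y w * ln (Pyw y w / (Py y * R w))))"
    unfolding zeta_def Let_def Pyw_def Py_def R_def ..
  also have "\<bar>\<dots>\<bar> \<le> (\<Sum>y\<in>Ys j. \<bar>\<Sum>w\<in>Ws j.
           (if Pyw y w = 0 then 0 else Pyw y w * ln (Pyw y w / (Py y * R w)))\<bar>)"
    by (rule sum_abs)
  also have "\<dots> \<le> (\<Sum>y\<in>Ys j. \<Sum>w\<in>Ws j. \<bar>(if Pyw y w = 0 then 0 else Pyw y w * ln (Pyw y w / (Py y * R w)))\<bar>)"
    by (intro sum_mono sum_abs)
  also have "\<dots> \<le> (\<Sum>y\<in>Ys j. \<Sum>w\<in>Ws j. K * R w + K / R w)"
    by (intro sum_mono tb)
  also have "\<dots> = Cz n Ys Ws p j" unfolding Cz_def K_def R_def ..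
  finally show ?thesis .
qed

lemma xi_nonneg:
  fixes p :: "'x::finite \<Rightarrow> (nat \<Rightarrow> 'x) \<Rightarrow> (nat \<Rightarrow> 'w) \<Rightarrow> real"
    and alpha :: "nat \<Rightarrow> 'y \<Rightarrow> 'x \<Rightarrow> 'w \<Rightarrow> real"
  assumes dn: "\<forall>x xh. d x xh \<ge> 0"
    and pn: "\<forall>x. \<forall>zs\<in>PiE {1..n} (\<lambda>_. UNIV). \<forall>ws\<in>PiE {1..n} Ws. p x zs ws \<ge> 0"
    and aA: "\<forall>i\<in>{1..n}. inA (Ys i) (Ws i) (alpha i)"
    and bB: "inB n Ys beta"
  shows "0 \<le> xi n Ys Ws d p beta alpha"
  unfolding xi_def
proof (intro sum_nonneg mult_nonneg_nonneg prod_nonneg)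
  fix ys :: "nat \<Rightarrow> 'y" and zs :: "nat \<Rightarrow> 'x" and ws :: "nat \<Rightarrow> 'w" and x xh :: 'x
  assume ys: "ys \<in> PiE {1..n} Ys" and zs: "zs \<in> PiE {1..n} (\<lambda>_. UNIV)" and ws: "ws \<in> PiE {1..n} Ws"
  show "0 \<le> d x xh" using dn by auto
  show "0 \<le> beta xh ys" using bB ys by (auto simp: inB_def)
  show "0 \<le> p x zs ws" using pn zs ws by auto
  fix i assume i: "i \<in> {1..n}"
  have "ys i \<in> Ys i" "ws i \<in> Ws i" using ys ws i by (auto simp: PiE_def Pi_def)
  then show "0 \<le> alpha i (ys i) (zs i) (ws i)" using aA i by (auto simp: inA_def)
qed

theorem mainTheorem9:
  fixes n :: nat
    and Ys :: "nat \<Rightarrow> 'y set" and Ws :: "nat \<Rightarrow> 'w set"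
    and d :: "'x::finite \<Rightarrow> 'x \<Rightarrow> real"
    and p :: "'x \<Rightarrow> (nat \<Rightarrow> 'x) \<Rightarrow> (nat \<Rightarrow> 'w) \<Rightarrow> real"
    and rho :: real
    and alpha0 :: "nat \<Rightarrow> 'y \<Rightarrow> 'x \<Rightarrow> 'w \<Rightarrow> real"
    and beta0 :: "'x \<Rightarrow> (nat \<Rightarrow> 'y) \<Rightarrow> real"
    and selR :: "nat list \<Rightarrow> (nat \<Rightarrow> 'y \<Rightarrow> 'x \<Rightarrow> 'w \<Rightarrow> real) \<Rightarrow> ('x \<Rightarrow> (nat \<Rightarrow> 'y) \<Rightarrow> real)"
    and selS :: "nat list \<Rightarrow> nat \<Rightarrow> (nat \<Rightarrow> 'y \<Rightarrow> 'x \<Rightarrow> 'w \<Rightarrow> real) \<Rightarrow> ('x \<Rightarrow> (nat \<Rightarrow> 'y) \<Rightarrow> real)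
                 \<Rightarrow> ('y \<Rightarrow> 'x \<Rightarrow> 'w \<Rightarrow> real)"
    and eps :: real
  assumes n2: "n \<ge> 2"
    and Ws_fin: "\<forall>i\<in>{1..n}. finite (Ws i) \<and> Ws i \<noteq> {}"
    and Ys_fin: "\<forall>i\<in>{1..n}. finite (Ys i) \<and> Ys i \<noteq> {}"
    and d_nonneg: "\<forall>x xh. d x xh \<ge> 0"
    and p_nonneg: "\<forall>x. \<forall>zs\<in>PiE {1..n} (\<lambda>_. UNIV). \<forall>ws\<in>PiE {1..n} Ws. p x zs ws \<ge> 0"
    and p_sum: "(\<Sum>x\<in>UNIV. \<Sum>zs\<in>PiE {1..n} (\<lambda>_. UNIV). \<Sum>ws\<in>PiE {1..n} Ws. p x zs ws) = 1"
    and alpha0_A: "\<forall>i\<in>{1..n}. inA (Ys i) (Ws i) (alpha0 i)"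
    and beta0_B: "inB n Ys beta0"
    and selR_argmin: "\<forall>h alpha. (\<forall>i\<in>{1..n}. inA (Ys i) (Ws i) (alpha i)) \<longrightarrow>
        inB n Ys (selR h alpha) \<and>
        (\<forall>b. inB n Ys b \<longrightarrow> V n Ys Ws d p alpha (selR h alpha) \<le> V n Ys Ws d p alpha b)"
    and selS_argmin: "\<forall>h j alpha beta. j \<in> {1..n} \<and> (\<forall>i\<in>{1..n}. inA (Ys i) (Ws i) (alpha i)) \<and> inB n Ys beta
        \<longrightarrow> inA (Ys j) (Ws j) (selS h j alpha beta) \<and>
            (\<forall>a. inA (Ys j) (Ws j) a \<longrightarrow>
               U n Ys Ws d p rho j (alpha(j := selS h j alpha beta)) beta
                 \<le> U n Ys Ws d p rho j (alpha(j := a)) beta)"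
    and eps_pos: "eps > 0"
  shows "(\<lambda>k. measure_pmf.prob (pmf_of_set {h. length h = k \<and> set h \<subseteq> {0..n}})
            {h. traj selR selS (alpha0, beta0) h \<in> Neps n Ys Ws d p rho eps})
         \<longlonglongrightarrow> 1"
  proof -
  define feas where "feas ab \<longleftrightarrow> (\<forall>i\<in>{1..n}. inA (Ys i) (Ws i) (fst ab i)) \<and> inB n Ys (snd ab)"
    for ab :: "(nat \<Rightarrow> 'y \<Rightarrow> 'x \<Rightarrow> 'w \<Rightarrow> real) \<times> ('x \<Rightarrow> (nat \<Rightarrow> 'y) \<Rightarrow> real)"
  define Zs where "Zs al = (\<Sum>i\<in>{1..n}. zeta n Ys Ws p i (al i))" for al :: "nat \<Rightarrow> 'y \<Rightarrow> 'x \<Rightarrow> 'w \<Rightarrow> real"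
  define Phi where "Phi ab = xi n Ys Ws d p (snd ab) (fst ab) + rho * Zs (fst ab)"
    for ab :: "(nat \<Rightarrow> 'y \<Rightarrow> 'x \<Rightarrow> 'w \<Rightarrow> real) \<times> ('x \<Rightarrow> (nat \<Rightarrow> 'y) \<Rightarrow> real)"
  define T where "T h = traj selR selS (alpha0, beta0) h" for h
  have Tcons: "T (j # h) = (if j = 0 then (fst (T h), selR h (fst (T h)))
      else ((fst (T h))(j := selS h j (fst (T h)) (snd (T h))), snd (T h)))" for j h
    by (simp add: T_def Let_def)
  have feasT: "set h \<subseteq> {0..n} \<Longrightarrow> feas (T h)" for h
  proof (induction h)
    case Nil then show ?case using alpha0_A beta0_B by (simp add: feas_def T_def)
  next
    case (Cons j h)
    then have IH: "feas (T h)" and j: "j \<le> n" by auto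
    show ?case
    proof (cases "j = 0")
      case True then show ?thesis using IH selR_argmin by (simp add: Tcons feas_def)
    next
      case False
      then have j1: "j \<in> {1..n}" using j by auto
      have "inA (Ys j) (Ws j) (selS h j (fst (T h)) (snd (T h)))"
        using selS_argmin IH j1 by (auto simp: feas_def)
      then show ?thesis using False IH by (auto simp: Tcons feas_def)
    qed
  qed
  have Zs_split: "Zs al = zeta n Ys Ws p j (al j) + (\<Sum>i\<in>{1..n} - {j}. zeta n Ys Ws p i (al i))"
    if "j \<in> {1..n}" for al j
    unfolding Zs_def using that by (simp add: sum.remove)
  have Zs_upd: "(\<Sum>i\<in>{1..n} - {j}. zeta n Ys Ws p i ((al(j := a)) i)) = (\<Sum>i\<in>{1..n} - {j}. zeta n Ys Ws p i (al i))"
    for al j a by (intro sum.cong) auto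
  have PhiU: "Phi (al, be) = U n Ys Ws d p rho j al be + rho * (\<Sum>i\<in>{1..n} - {j}. zeta n Ys Ws p i (al i))"
    if "j \<in> {1..n}" for al be j
    using Zs_split[OF that, of al] by (simp add: Phi_def U_def algebra_simps)
  have PhiV: "Phi (al, be) = V n Ys Ws d p al be + rho * Zs al" for al be
    by (simp add: Phi_def V_def)
  define Lm where "Lm = - (\<bar>rho\<bar> * (\<Sum>i\<in>{1..n}. Cz n Ys Ws p i))"
  have lb: "Phi ab \<ge> Lm" if "feas ab" for ab
  proof -
    have x0: "0 \<le> xi n Ys Ws d p (snd ab) (fst ab)"
      using xi_nonneg[OF d_nonneg p_nonneg] that by (auto simp: feas_def)
    have "\<bar>Zs (fst ab)\<bar> \<le> (\<Sum>i\<in>{1..n}. \<bar>zeta n Ys Ws p i (fst ab i)\<bar>)"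
      unfolding Zs_def by (rule sum_abs)
    also have "\<dots> \<le> (\<Sum>i\<in>{1..n}. Cz n Ys Ws p i)"
      using that Ws_fin Ys_fin by (intro sum_mono zeta_bound[OF p_nonneg]) (auto simp: feas_def)
    finally have "\<bar>Zs (fst ab)\<bar> \<le> (\<Sum>i\<in>{1..n}. Cz n Ys Ws p i)" .
    then have "\<bar>rho * Zs (fst ab)\<bar> \<le> \<bar>rho\<bar> * (\<Sum>i\<in>{1..n}. Cz n Ys Ws p i)"
      by (simp add: abs_mult mult_left_mono)
    then show ?thesis using x0 unfolding Phi_def Lm_def by (simp add: abs_le_iff)
  qed
  have monoT: "Phi (T (j # h)) \<le> Phi (T h)" if "set h \<subseteq> {0..n}" "j \<in> {0..n}" for h j
  proof -
    have F: "feas (T h)" using feasT that(1) .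
    obtain al be where ab: "T h = (al, be)" by fastforce
    show ?thesis
    proof (cases "j = 0")
      case True
      have "V n Ys Ws d p al (selR h al) \<le> V n Ys Ws d p al be"
        using selR_argmin F ab by (auto simp: feas_def)
      then show ?thesis using True ab by (simp add: Tcons PhiV)
    next
      case False
      then have j1: "j \<in> {1..n}" using that by auto
      have A: "\<forall>i\<in>{1..n}. inA (Ys i) (Ws i) (al i)" "inB n Ys be" using F ab by (auto simp: feas_def)
      have aj: "inA (Ys j) (Ws j) (al j)" using A j1 by auto
      have "U n Ys Ws d p rho j (al(j := selS h j al be)) be \<le> U n Ys Ws d p rho j (al(j := al j)) be"
        using selS_argmin j1 A aj by blast
      then show ?thesis using False ab j1 by (simp add: Tcons PhiU[OF j1] Zs_upd)
    qed
  qed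
  have dropT: "\<exists>j\<in>{0..n}. Phi (T (j # h)) \<le> Phi (T h) - eps"
    if "set h \<subseteq> {0..n}" "T h \<notin> Neps n Ys Ws d p rho eps" for h
  proof -
    have F: "feas (T h)" using feasT that(1) .
    obtain al be where ab: "T h = (al, be)" by fastforce
    have "(\<exists>j\<in>{1..n}. \<exists>a. inA (Ys j) (Ws j) a \<and>
            U n Ys Ws d p rho j (al(j := a)) be + eps < U n Ys Ws d p rho j al be) \<or>
          (\<exists>bb. inB n Ys bb \<and> V n Ys Ws d p al bb + eps < V n Ys Ws d p al be)"
      using that(2) F ab by (auto simp: Neps_def feas_def not_le)
    then show ?thesis
    proof
      assume "\<exists>j\<in>{1..n}. \<exists>a. inA (Ys j) (Ws j) a \<and>
            U n Ys Ws d p rho j (al(j := a)) be + eps < U n Ys Ws d p rho j al be"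
      then obtain j a where j1: "j \<in> {1..n}" and a: "inA (Ys j) (Ws j) a"
        and lt: "U n Ys Ws d p rho j (al(j := a)) be + eps < U n Ys Ws d p rho j al be" by blast
      have "U n Ys Ws d p rho j (al(j := selS h j al be)) be \<le> U n Ys Ws d p rho j (al(j := a)) be"
        using selS_argmin F ab j1 a by (auto simp: feas_def)
      then have "Phi (T (j # h)) \<le> Phi (T h) - eps"
        using lt j1 ab by (simp add: Tcons PhiU[OF j1] Zs_upd)
      then show ?thesis using j1 by auto
    next
      assume "\<exists>bb. inB n Ys bb \<and> V n Ys Ws d p al bb + eps < V n Ys Ws d p al be"
      then obtain bb where b: "inB n Ys bb" and lt: "V n Ys Ws d p al bb + eps < V n Ys Ws d p al be" by blast
      have "V n Ys Ws d p al (selR h al) \<le> V n Ys Ws d p al bb"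
        using selR_argmin F ab b by (auto simp: feas_def)
      then have "Phi (T (0 # h)) \<le> Phi (T h) - eps"
        using lt ab by (simp add: Tcons PhiV)
      then show ?thesis by auto
    qed
  qed
  have "(\<lambda>k. measure_pmf.prob (pmf_of_set {h. length h = k \<and> set h \<subseteq> {0..n}})
            {h. T h \<in> Neps n Ys Ws d p rho eps}) \<longlonglongrightarrow> 1"
    by (rule abstract_conv[where f="\<lambda>h. Phi (T h)" and Lm=Lm and eps=eps])
       (use lb feasT monoT dropT eps_pos in auto)
  then show ?thesis by (simp add: T_def)
qed

end
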